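(* Let $\mu=\min\{\kappa : 2^{\kappa}$ is not selectively sequentially separable$\}$. Then $\mu=\min\{\mathfrak{b},\mathfrak{q}\}$.
   Context: $2^\kappa$ denotes the Cantor cube $\{0,1\}^\kappa$ with the product topology. A space $Z$ is selectively sequentially separable if for every sequence $(D_n:n\in\mathbb{N})$ of sequentially dense subsets of $Z$ (sets such that every point of $Z$ is a limit of a sequence from the set) one can choose finite $F_n\subseteq D_n$ so that $\bigcup_n F_n$ is sequentially dense in $Z$. $\mathfrak{b}$ is the least cardinality of a subset of $\mathbb{N}^{\mathbb{N}}$ unbounded with respect to $\leq^*$ ($f\leq^* g$ iff $f(n)\leq g(n)$ for all but finitely many $n$). A $Q$-set is a subset of $\mathbb{R}$ each of whose subsets is a $G_\delta$ in it; $\mathfrak{q}$ is the smallest cardinal such that for every $\kappa<\mathfrak{q}$ there is a $Q$-set of size $\kappa$. *)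

theory Defs
  imports "HOL-Analysis.Analysis"
begin

definition cantor_cube :: "'a set \<Rightarrow> ('a \<Rightarrow> bool) topology" where
  "cantor_cube K = product_topology (\<lambda>_. discrete_topology (UNIV :: bool set)) K"

definition seq_dense :: "'a topology \<Rightarrow> 'a set \<Rightarrow> bool" where
  "seq_dense Z D \<longleftrightarrow> D \<subseteq> topspace Z \<and>
     (\<forall>z \<in> topspace Z. \<exists>s :: nat \<Rightarrow> 'a. range s \<subseteq> D \<and> limitin Z s z sequentially)"

definition sel_seq_separable :: "'a topology \<Rightarrow> bool" where
  "sel_seq_separable Z \<longleftrightarrow>
     (\<forall>D :: nat \<Rightarrow> 'a set. (\<forall>n. seq_dense Z (D n)) \<longrightarrow>
        (\<exists>F :: nat \<Rightarrow> 'a set. (\<forall>n. finite (F n) \<and> F n \<subseteq> D n) \<and>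
                               seq_dense Z (\<Union>n. F n)))"

definition unbounded_family :: "(nat \<Rightarrow> nat) set \<Rightarrow> bool" where
  "unbounded_family F \<longleftrightarrow>
     \<not> (\<exists>g :: nat \<Rightarrow> nat. \<forall>f \<in> F. eventually (\<lambda>n. f n \<le> g n) sequentially)"

definition below_b :: "'a set \<Rightarrow> bool" where
  "below_b K \<longleftrightarrow> (\<forall>F. unbounded_family F \<longrightarrow> ordLess2 (card_of K) (card_of F))"

definition qset :: "real set \<Rightarrow> bool" where
  "qset Q \<longleftrightarrow> (\<forall>A \<subseteq> Q. \<exists>U :: nat \<Rightarrow> real set.
                    (\<forall>n. open (U n)) \<and> A = Q \<inter> (\<Inter>n. U n))"

text \<open>|K| < q: there is a Q-set of size |K| (Q-sets are closed under subsets,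
  so the sizes of Q-sets form an initial segment of the cardinals and q is
  the least size of no Q-set).\<close>
definition below_q :: "'a set \<Rightarrow> bool" where
  "below_q K \<longleftrightarrow> (\<exists>Q. qset Q \<and> ordIso2 (card_of Q) (card_of K))"

definition below_min_bq :: "'a set \<Rightarrow> bool" where
  "below_min_bq K \<longleftrightarrow> below_b K \<and> below_q K"

end

theory Submission
  imports Defs "HOL-Library.Countable_Set"
begin

lemma limitin_discrete_iff:
  "limitin (discrete_topology (UNIV::bool set)) s l F \<longleftrightarrow> eventually (\<lambda>x. s x = l) F"
  unfolding limitin_def
proof safe
  assume "\<forall>U. openin (discrete_topology UNIV) U \<and> l \<in> U \<longrightarrow> (\<forall>\<^sub>F x in F. s x \<in> U)"
  then have "\<forall>\<^sub>F x in F. s x \<in> {l}" by auto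
  then show "\<forall>\<^sub>F x in F. s x = l" by simp
next
  fix U assume "\<forall>\<^sub>F x in F. s x = l" "l \<in> U"
  then show "\<forall>\<^sub>F x in F. s x \<in> U" by (auto elim: eventually_mono)
qed simp

lemma topspace_cc: "topspace (cantor_cube K) = PiE K (\<lambda>_. UNIV)"
  unfolding cantor_cube_def by simp

lemma limitin_cc:
  "limitin (cantor_cube K) s z sequentially \<longleftrightarrow>
     z \<in> extensional K \<and> eventually (\<lambda>k. s k \<in> PiE K (\<lambda>_. UNIV)) sequentially \<and>
     (\<forall>i\<in>K. eventually (\<lambda>k. s k i = z i) sequentially)"
  unfolding cantor_cube_def limitin_componentwise limitin_discrete_iff by simp

lemma below_b_bound:
  fixes \<phi> :: "'a \<Rightarrow> nat \<Rightarrow> nat"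
  assumes "below_b K"
  shows "\<exists>g. \<forall>\<alpha>\<in>K. eventually (\<lambda>n. \<phi> \<alpha> n \<le> g n) sequentially"
proof (rule ccontr)
  assume "\<not> ?thesis"
  then have "unbounded_family (\<phi> ` K)" unfolding unbounded_family_def by auto
  then have "ordLess2 (card_of K) (card_of (\<phi> ` K))" using assms unfolding below_b_def by blast
  moreover have "ordLeq3 (card_of (\<phi> ` K)) (card_of K)" by (rule card_of_image)
  ultimately show False using not_ordLess_ordLeq by blast
qed

lemma sss_from_sep:
  fixes c :: "nat \<Rightarrow> 'a \<Rightarrow> bool" and K :: "'a set"
  assumes b: "below_b K" and c: "seq_dense (cantor_cube K) (range c)"
  shows "sel_seq_separable (cantor_cube K)"
  unfolding sel_seq_separable_def
proof (intro allI impI)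
  fix D :: "nat \<Rightarrow> ('a \<Rightarrow> bool) set" assume D: "\<forall>n. seq_dense (cantor_cube K) (D n)"
  have ctop: "c m \<in> topspace (cantor_cube K)" for m using c unfolding seq_dense_def by auto
  have "\<forall>n m. \<exists>\<sigma>. range \<sigma> \<subseteq> D n \<and> limitin (cantor_cube K) \<sigma> (c m) sequentially"
    using D ctop unfolding seq_dense_def by blast
  then obtain \<sigma> :: "nat \<Rightarrow> nat \<Rightarrow> nat \<Rightarrow> 'a \<Rightarrow> bool" where \<sigma>: "\<And>n m. range (\<sigma> n m) \<subseteq> D n \<and> limitin (cantor_cube K) (\<sigma> n m) (c m) sequentially"
    by metis
  define J where "J \<alpha> n m = (LEAST j. \<forall>i\<ge>j. \<sigma> n m i \<alpha> = c m \<alpha>)" for \<alpha> n m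
  have Jp: "\<forall>i\<ge>J \<alpha> n m. \<sigma> n m i \<alpha> = c m \<alpha>" if "\<alpha> \<in> K" for \<alpha> n m
  proof -
    have "eventually (\<lambda>k. \<sigma> n m k \<alpha> = c m \<alpha>) sequentially"
      using \<sigma>[of n m] that unfolding limitin_cc by blast
    then have "\<exists>j. \<forall>i\<ge>j. \<sigma> n m i \<alpha> = c m \<alpha>" unfolding eventually_sequentially .
    then show ?thesis unfolding J_def by (rule LeastI_ex)
  qed
  define \<tau> where "\<tau> \<alpha> n = Max ((\<lambda>m. J \<alpha> n m) ` {..n})" for \<alpha> n
  obtain g where g: "\<forall>\<alpha>\<in>K. eventually (\<lambda>n. \<tau> \<alpha> n \<le> g n) sequentially"
    using below_b_bound[OF b] by blast
  define F where "F n = (\<lambda>m. \<sigma> n m (g n)) ` {..n}" for n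
  have FD: "F n \<subseteq> D n" for n using \<sigma> unfolding F_def by blast
  have Dtop: "D n \<subseteq> topspace (cantor_cube K)" for n using D unfolding seq_dense_def by blast
  have "seq_dense (cantor_cube K) (\<Union>n. F n)"
    unfolding seq_dense_def
  proof (intro conjI ballI)
    show "(\<Union>n. F n) \<subseteq> topspace (cantor_cube K)" using FD Dtop by blast
  next
    fix z assume z: "z \<in> topspace (cantor_cube K)"
    then obtain s where s: "range s \<subseteq> range c" "limitin (cantor_cube K) s z sequentially"
      using c unfolding seq_dense_def by blast
    have "\<forall>k. \<exists>m. s k = c m" using s(1) by blast
    then obtain m where m: "\<And>k. s k = c (m k)" by metis
    define y where "y k = \<sigma> (m k + k) (m k) (g (m k + k))" for k
    have yF: "y k \<in> F (m k + k)" for k unfolding y_def F_def by auto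
    have "limitin (cantor_cube K) y z sequentially"
      unfolding limitin_cc
    proof (intro conjI ballI)
      show "z \<in> extensional K" using z by (simp add: topspace_cc PiE_def)
      show "\<forall>\<^sub>F k in sequentially. y k \<in> PiE K (\<lambda>_. UNIV)"
      proof (intro always_eventually allI)
        fix k show "y k \<in> PiE K (\<lambda>_. UNIV)" using yF[of k] FD Dtop unfolding topspace_cc by blast
      qed
    next
      fix \<alpha> assume a: "\<alpha> \<in> K"
      obtain K1 where K1: "\<And>k. k \<ge> K1 \<Longrightarrow> s k \<alpha> = z \<alpha>"
        using s(2) a unfolding limitin_cc eventually_sequentially by blast
      obtain N1 where N1: "\<And>n. n \<ge> N1 \<Longrightarrow> \<tau> \<alpha> n \<le> g n"
        using g a unfolding eventually_sequentially by blast
      have "y k \<alpha> = z \<alpha>" if "k \<ge> max K1 N1" for k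
      proof -
        let ?n = "m k + k"
        have "J \<alpha> ?n (m k) \<le> \<tau> \<alpha> ?n" unfolding \<tau>_def by (rule Max_ge) auto
        also have "\<dots> \<le> g ?n" using N1 that by auto
        finally have "\<sigma> ?n (m k) (g ?n) \<alpha> = c (m k) \<alpha>" using Jp[OF a] by blast
        then show ?thesis using K1[of k] that m[of k] unfolding y_def by simp
      qed
      then show "\<forall>\<^sub>F k in sequentially. y k \<alpha> = z \<alpha>" unfolding eventually_sequentially by blast
    qed
    moreover have "range y \<subseteq> (\<Union>n. F n)" using yF by blast
    ultimately show "\<exists>s. range s \<subseteq> (\<Union>n. F n) \<and> limitin (cantor_cube K) s z sequentially" by blast
  qed
  moreover have "\<forall>n. finite (F n) \<and> F n \<subseteq> D n" using FD unfolding F_def by auto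
  ultimately show "\<exists>F. (\<forall>n. finite (F n) \<and> F n \<subseteq> D n) \<and> seq_dense (cantor_cube K) (\<Union>n. F n)" by blast
qed

lemma sep_from_q:
  fixes K :: "'a set"
  assumes b: "below_b K" and q: "below_q K"
  shows "\<exists>c :: nat \<Rightarrow> 'a \<Rightarrow> bool. seq_dense (cantor_cube K) (range c)"
proof -
  obtain Q where Q: "qset Q" "ordIso2 (card_of Q) (card_of K)" using q unfolding below_q_def by blast
  then obtain f where f: "bij_betw f Q K" using card_of_ordIso by blast
  define h where "h = inv_into Q f"
  have h: "bij_betw h K Q" unfolding h_def using f by (rule bij_betw_inv_into)
  obtain \<B> :: "real set set" where B: "countable \<B>" "topological_basis \<B>"
    using ex_countable_basis by blast
  have Bne: "\<B> \<noteq> {}" using topological_basisE[OF B(2), of UNIV 0] by auto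
  define bb where "bb = from_nat_into \<B>"
  have rbb: "range bb = \<B>" unfolding bb_def using B(1) Bne by (simp add: range_from_nat_into)
  have bbopen: "open (bb i)" for i using topological_basis_open[OF B(2)] rbb by blast
  have bbcover: "\<exists>i. x \<in> bb i \<and> bb i \<subseteq> S" if S: "open S" and xS: "x \<in> S" for S x
  proof -
    obtain u where "u \<in> \<B>" "x \<in> u" "u \<subseteq> S" using topological_basisE[OF B(2) S xS] by blast
    then show ?thesis using rbb by blast
  qed
  define pt where "pt F = (\<lambda>\<alpha>. if \<alpha> \<in> K then (\<exists>i\<in>F. h \<alpha> \<in> bb i) else undefined)" for F :: "nat set"
  define C where "C = pt ` Collect finite"
  have Ccount: "countable C" unfolding C_def by (intro countable_image countable_Collect_finite)
  have Cne: "C \<noteq> {}" unfolding C_def by blast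
  define c where "c = from_nat_into C"
  have rc: "range c = C" unfolding c_def using Ccount Cne by (simp add: range_from_nat_into)
  have pttop: "pt F \<in> PiE K (\<lambda>_. UNIV)" for F unfolding pt_def PiE_def extensional_def by auto
  have "seq_dense (cantor_cube K) (range c)"
    unfolding seq_dense_def
  proof (intro conjI ballI)
    show "range c \<subseteq> topspace (cantor_cube K)" unfolding rc C_def topspace_cc using pttop by blast
  next
    fix z assume z: "z \<in> topspace (cantor_cube K)"
    define A where "A = {\<alpha>\<in>K. z \<alpha>}"
    have hA: "h ` A \<subseteq> Q" using h unfolding A_def bij_betw_def by auto
    obtain U :: "nat \<Rightarrow> real set" where U: "\<forall>n. open (U n)" "h ` A = Q \<inter> (\<Inter>n. U n)"
      using Q(1)[unfolded qset_def, rule_format, OF hA] by blast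
    define V where "V n = (\<Inter>i\<in>{..n}. U i)" for n
    have Vopen: "open (V n)" for n unfolding V_def using U(1) by (intro open_INT) auto
    define \<mu> where "\<mu> \<alpha> n = (LEAST i. h \<alpha> \<in> bb i \<and> bb i \<subseteq> V n)" for \<alpha> n
    obtain g where g: "\<forall>\<alpha>\<in>K. eventually (\<lambda>n. \<mu> \<alpha> n \<le> g n) sequentially"
      using below_b_bound[OF b, of \<mu>] by blast
    define s where "s n = pt {i. i \<le> g n \<and> bb i \<subseteq> V n}" for n
    have sC: "s n \<in> C" for n
    proof -
      have "finite {i. i \<le> g n \<and> bb i \<subseteq> V n}" by (rule finite_subset[of _ "{..g n}"]) auto
      then show ?thesis unfolding s_def C_def by blast
    qed
    have "limitin (cantor_cube K) s z sequentially"
      unfolding limitin_cc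
    proof (intro conjI ballI)
      show "z \<in> extensional K" using z by (simp add: topspace_cc PiE_def)
      show "\<forall>\<^sub>F k in sequentially. s k \<in> PiE K (\<lambda>_. UNIV)"
        using pttop unfolding s_def by (intro always_eventually) blast
    next
      fix \<alpha> assume a: "\<alpha> \<in> K"
      show "\<forall>\<^sub>F n in sequentially. s n \<alpha> = z \<alpha>"
      proof (cases "z \<alpha>")
        case True
        then have "h \<alpha> \<in> h ` A" unfolding A_def using a by blast
        then have "h \<alpha> \<in> Q \<inter> (\<Inter>n. U n)" using U(2) by simp
        then have inV: "h \<alpha> \<in> V n" for n unfolding V_def by simp
        have mu: "h \<alpha> \<in> bb (\<mu> \<alpha> n) \<and> bb (\<mu> \<alpha> n) \<subseteq> V n" for n
          unfolding \<mu>_def by (rule LeastI_ex) (use bbcover[OF Vopen inV] in blast)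
        show ?thesis using g a
        proof (elim ballE eventually_mono)
          fix n assume "\<mu> \<alpha> n \<le> g n"
          then show "s n \<alpha> = z \<alpha>" using mu[of n] True a unfolding s_def pt_def by auto
        qed auto
      next
        case False
        have "h \<alpha> \<notin> h ` A"
        proof
          assume "h \<alpha> \<in> h ` A"
          then obtain \<beta> where "\<beta> \<in> A" "h \<alpha> = h \<beta>" by blast
          then have "\<alpha> = \<beta>" using h a unfolding bij_betw_def inj_on_def A_def by blast
          then show False using False \<open>\<beta> \<in> A\<close> unfolding A_def by blast
        qed
        moreover have "h \<alpha> \<in> Q" using h a unfolding bij_betw_def by blast
        ultimately have "h \<alpha> \<notin> (\<Inter>n. U n)" using U(2) by simp
        then obtain i where i: "h \<alpha> \<notin> U i" by blast
        have "s n \<alpha> = z \<alpha>" if "n \<ge> i" for n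
        proof -
          have "h \<alpha> \<notin> V n" using i that unfolding V_def by auto
          then show ?thesis using False a unfolding s_def pt_def by auto
        qed
        then show ?thesis unfolding eventually_sequentially by blast
      qed
    qed
    moreover have "range s \<subseteq> range c" using sC rc by blast
    ultimately show "\<exists>s. range s \<subseteq> range c \<and> limitin (cantor_cube K) s z sequentially" by blast
  qed
  then show ?thesis by blast
qed

definition enc :: "(nat \<Rightarrow> bool) \<Rightarrow> real" where
  "enc a = (\<Sum>m. if a m then 2 * (1/3) ^ Suc m else 0)"

lemma summable_term: "summable (\<lambda>m. if a m then 2 * (1/3::real) ^ Suc m else 0)"
proof (rule summable_comparison_test[where g = "\<lambda>m. 2 * (1/3::real) ^ Suc m"])
  show "\<exists>N. \<forall>n\<ge>N. norm (if a n then 2 * (1/3::real) ^ Suc n else 0) \<le> 2 * (1/3) ^ Suc n" by auto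
  show "summable (\<lambda>m. 2 * (1/3::real) ^ Suc m)"
    by (intro summable_mult summable_geometric_iff[THEN iffD2] summable_ignore_initial_segment[where k=1, simplified]) auto
qed

lemma enc_sep_aux:
  assumes "\<forall>i<k. a i = b i" "a k \<noteq> b k"
  shows "(1/3::real) ^ Suc k \<le> \<bar>enc a - enc b\<bar>"
proof -
  define ta where "ta m = (if a m then 2 * (1/3::real) ^ Suc m else 0)" for m
  define tb where "tb m = (if b m then 2 * (1/3::real) ^ Suc m else 0)" for m
  define \<delta> where "\<delta> m = ta m - tb m" for m
  have sa: "summable ta" and sb: "summable tb" unfolding ta_def tb_def by (rule summable_term)+
  have sd: "summable \<delta>" unfolding \<delta>_def using sa sb by (rule summable_diff)
  have "enc a - enc b = suminf \<delta>" unfolding enc_def \<delta>_def ta_def[symmetric] tb_def[symmetric]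
    using suminf_diff[OF sa sb] by simp
  also have "\<dots> = (\<Sum>n. \<delta> (n + k)) + sum \<delta> {..<k}"
    using suminf_split_initial_segment[OF sd, of k] by simp
  also have "sum \<delta> {..<k} = 0" using assms(1) unfolding \<delta>_def ta_def tb_def by simp
  finally have e1: "enc a - enc b = (\<Sum>n. \<delta> (n + k))" by simp
  have sdk: "summable (\<lambda>n. \<delta> (n + k))" using sd by (rule summable_ignore_initial_segment)
  have "(\<Sum>n. \<delta> (Suc n + k)) = (\<Sum>n. \<delta> (n + k)) - \<delta> (0 + k)"
    using suminf_split_head[OF sdk] by simp
  then have e2: "enc a - enc b = \<delta> k + (\<Sum>n. \<delta> (Suc n + k))" using e1 by simp
  define C where "C = 2 * (1/3::real) ^ (k + 2)"
  define g where "g n = C * (1/3::real) ^ n" for n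
  have geo: "summable (\<lambda>n. (1/3::real) ^ n)" by (rule summable_geometric) auto
  have gs: "summable g" unfolding g_def using geo by (rule summable_mult)
  have gsum: "(\<Sum>n. g n) = (1/3) ^ Suc k"
  proof -
    have "(\<Sum>n. g n) = C * (\<Sum>n. (1/3::real) ^ n)" unfolding g_def by (rule suminf_mult[OF geo])
    also have "(\<Sum>n. (1/3::real) ^ n) = 3/2" by (subst suminf_geometric) auto
    finally show ?thesis unfolding C_def by simp
  qed
  have bnd: "\<bar>\<delta> (Suc n + k)\<bar> \<le> g n" for n
  proof -
    have "g n = 2 * (1/3::real) ^ Suc (Suc n + k)" unfolding g_def C_def by (simp add: power_add)
    moreover have "0 \<le> g n" unfolding g_def C_def by simp
    ultimately show ?thesis unfolding \<delta>_def ta_def tb_def by auto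
  qed
  have "summable (\<lambda>n. \<bar>\<delta> (Suc n + k)\<bar>)"
    by (rule summable_comparison_test[OF _ gs]) (use bnd in auto)
  then have "\<bar>\<Sum>n. \<delta> (Suc n + k)\<bar> \<le> (\<Sum>n. \<bar>\<delta> (Suc n + k)\<bar>)" by (rule summable_rabs)
  also have "\<dots> \<le> (\<Sum>n. g n)" by (rule suminf_le) (use bnd gs \<open>summable (\<lambda>n. \<bar>\<delta> (Suc n + k)\<bar>)\<close> in auto)
  finally have t: "\<bar>\<Sum>n. \<delta> (Suc n + k)\<bar> \<le> (1/3) ^ Suc k" using gsum by simp
  have dk: "\<bar>\<delta> k\<bar> = 2 * (1/3) ^ Suc k" using assms(2) unfolding \<delta>_def ta_def tb_def by auto
  show ?thesis using e2 t dk by linarith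
qed

lemma enc_sep:
  assumes "a k \<noteq> b k"
  shows "(1/3::real) ^ Suc k \<le> \<bar>enc a - enc b\<bar>"
  using assms
proof (induction k rule: less_induct)
  case (less k)
  show ?case
  proof (cases "\<forall>i<k. a i = b i")
    case True
    then show ?thesis using enc_sep_aux less.prems by blast
  next
    case False
    then obtain i where i: "i < k" "a i \<noteq> b i" by blast
    have "(1/3::real) ^ Suc k \<le> (1/3) ^ Suc i" using i(1) by (intro power_decreasing) auto
    also have "\<dots> \<le> \<bar>enc a - enc b\<bar>" using less.IH i by blast
    finally show ?thesis .
  qed
qed

lemma seq_dense_seq:
  assumes c: "seq_dense (cantor_cube K) (range c)" and z: "z \<in> topspace (cantor_cube K)"
  shows "\<exists>m::nat\<Rightarrow>nat. \<forall>\<alpha>\<in>K. eventually (\<lambda>k. c (m k) \<alpha> = z \<alpha>) sequentially"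
proof -
  obtain s where s: "range s \<subseteq> range c" "limitin (cantor_cube K) s z sequentially"
    using c z unfolding seq_dense_def by blast
  have "\<forall>k. \<exists>m. s k = c m" using s(1) by blast
  then obtain m where m: "\<And>k. s k = c (m k)" by metis
  show ?thesis using s(2) unfolding limitin_cc m by blast
qed

lemma q_from_sep:
  fixes c :: "nat \<Rightarrow> 'a \<Rightarrow> bool" and K :: "'a set"
  assumes c: "seq_dense (cantor_cube K) (range c)"
  shows "below_q K"
proof -
  define e where "e \<alpha> = enc (\<lambda>m. c m \<alpha>)" for \<alpha>
  have esep: "(1/3::real) ^ Suc j \<le> \<bar>e \<alpha> - e \<beta>\<bar>" if "c j \<alpha> \<noteq> c j \<beta>" for j \<alpha> \<beta>
    unfolding e_def using enc_sep[of "\<lambda>m. c m \<alpha>" j "\<lambda>m. c m \<beta>"] that by simp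
  have inj: "inj_on e K"
  proof (rule inj_onI, rule ccontr)
    fix \<alpha> \<beta> assume a: "\<alpha> \<in> K" "\<beta> \<in> K" "e \<alpha> = e \<beta>" "\<alpha> \<noteq> \<beta>"
    define z where "z \<gamma> = (if \<gamma> \<in> K then \<gamma> = \<alpha> else undefined)" for \<gamma>
    have "z \<in> topspace (cantor_cube K)" unfolding topspace_cc z_def PiE_def extensional_def by auto
    then obtain m where m: "\<forall>\<gamma>\<in>K. eventually (\<lambda>k. c (m k) \<gamma> = z \<gamma>) sequentially"
      using seq_dense_seq[OF c] by blast
    have "eventually (\<lambda>k. c (m k) \<alpha> = z \<alpha> \<and> c (m k) \<beta> = z \<beta>) sequentially"
      using m a by (intro eventually_conj) auto
    then obtain k where "c (m k) \<alpha> = z \<alpha>" "c (m k) \<beta> = z \<beta>" using eventually_happens'[OF sequentially_bot] by blast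
    then have "c (m k) \<alpha> \<noteq> c (m k) \<beta>" using a unfolding z_def by auto
    then have "(1/3::real) ^ Suc (m k) \<le> \<bar>e \<alpha> - e \<beta>\<bar>" by (rule esep)
    moreover have "(0::real) < (1/3) ^ Suc (m k)" by simp
    moreover have "\<bar>e \<alpha> - e \<beta>\<bar> = 0" using a(3) by simp
    ultimately show False by linarith
  qed
  define Q where "Q = e ` K"
  have bij: "bij_betw e K Q" unfolding Q_def using inj by (simp add: bij_betw_def)
  have qs: "qset Q"
    unfolding qset_def
  proof (intro allI impI)
    fix A assume AQ: "A \<subseteq> Q"
    define z where "z \<gamma> = (if \<gamma> \<in> K then e \<gamma> \<in> A else undefined)" for \<gamma>
    have "z \<in> topspace (cantor_cube K)" unfolding topspace_cc z_def PiE_def extensional_def by auto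
    then obtain m where m: "\<forall>\<gamma>\<in>K. eventually (\<lambda>k. c (m k) \<gamma> = z \<gamma>) sequentially"
      using seq_dense_seq[OF c] by blast
    define Ob where "Ob j = (\<Union>\<beta>\<in>{\<beta>\<in>K. c j \<beta>}. ball (e \<beta>) ((1/3) ^ Suc j))" for j
    define U where "U M = (\<Union>k\<in>{M..}. Ob (m k))" for M
    have Uo: "open (U M)" for M unfolding U_def Ob_def by auto
    have "A = Q \<inter> (\<Inter>M. U M)"
    proof (intro equalityI subsetI)
      fix x assume xA: "x \<in> A"
      then obtain \<alpha> where a: "\<alpha> \<in> K" "x = e \<alpha>" using AQ unfolding Q_def by blast
      then have za: "z \<alpha>" unfolding z_def using xA by simp
      obtain N where N: "\<And>k. k \<ge> N \<Longrightarrow> c (m k) \<alpha> = z \<alpha>"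
        using m a(1) unfolding eventually_sequentially by blast
      have "x \<in> U M" for M
      proof -
        have "c (m (max M N)) \<alpha>" using N[of "max M N"] za by simp
        then have "x \<in> Ob (m (max M N))" unfolding Ob_def using a by force
        then show ?thesis unfolding U_def by force
      qed
      then show "x \<in> Q \<inter> (\<Inter>M. U M)" using AQ xA by blast
    next
      fix x assume x: "x \<in> Q \<inter> (\<Inter>M. U M)"
      then obtain \<alpha> where a: "\<alpha> \<in> K" "x = e \<alpha>" unfolding Q_def by blast
      show "x \<in> A"
      proof (rule ccontr)
        assume "x \<notin> A"
        then have za: "\<not> z \<alpha>" unfolding z_def using a by simp
        obtain N where N: "\<And>k. k \<ge> N \<Longrightarrow> c (m k) \<alpha> = z \<alpha>"
          using m a(1) unfolding eventually_sequentially by blast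
        have "x \<in> U N" using x by blast
        then obtain k \<beta> where kb: "k \<ge> N" "\<beta> \<in> K" "c (m k) \<beta>" "x \<in> ball (e \<beta>) ((1/3) ^ Suc (m k))"
          unfolding U_def Ob_def by blast
        have "c (m k) \<alpha> \<noteq> c (m k) \<beta>" using N[OF kb(1)] za kb(3) by simp
        then have "(1/3::real) ^ Suc (m k) \<le> \<bar>e \<alpha> - e \<beta>\<bar>" by (rule esep)
        moreover have "dist (e \<beta>) (e \<alpha>) < (1/3) ^ Suc (m k)" using kb(4) a by simp
        ultimately show False by (simp add: dist_real_def abs_minus_commute)
      qed
    qed
    then show "\<exists>U :: nat \<Rightarrow> real set. (\<forall>n. open (U n)) \<and> A = Q \<inter> (\<Inter>n. U n)" using Uo by blast
  qed
  have "bij_betw (inv_into K e) Q K" using bij by (rule bij_betw_inv_into)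
  then have "ordIso2 (card_of Q) (card_of K)" using card_of_ordIso by blast
  then show ?thesis unfolding below_q_def using qs by blast
qed

lemma finite_bound_ex:
  fixes P :: "'b \<Rightarrow> nat \<Rightarrow> bool"
  assumes "finite S" "\<forall>x\<in>S. \<exists>j. P x j"
  shows "\<exists>G. \<forall>x\<in>S. \<exists>j\<le>G. P x j"
  using assms
proof (induction S rule: finite_induct)
  case empty then show ?case by simp
next
  case (insert x S)
  then obtain G where G: "\<forall>y\<in>S. \<exists>j\<le>G. P y j" by auto
  obtain j where "P x j" using insert.prems by auto
  have "\<forall>y\<in>insert x S. \<exists>j'\<le>max G j. P y j'"
  proof
    fix y assume "y \<in> insert x S"
    then show "\<exists>j'\<le>max G j. P y j'"
    proof
      assume "y = x" then show ?thesis using \<open>P x j\<close> by (intro exI[of _ j]) auto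
    next
      assume "y \<in> S" then obtain j' where "j' \<le> G" "P y j'" using G by blast
      then show ?thesis by (intro exI[of _ j']) auto
    qed
  qed
  then show ?case by blast
qed

lemma infinite_ge: "\<not> finite (A :: nat set) \<Longrightarrow> \<exists>k\<in>A. k \<ge> M"
  by (metis finite_nat_set_iff_bounded_le nat_le_linear)

lemma not_sss_b:
  fixes c :: "nat \<Rightarrow> 'a \<Rightarrow> bool" and K :: "'a set"
  assumes c: "seq_dense (cantor_cube K) (range c)" and nb: "\<not> below_b K"
  shows "\<not> sel_seq_separable (cantor_cube K)"
proof
  assume sss: "sel_seq_separable (cantor_cube K)"
  obtain Fam where Fam: "unbounded_family Fam" "\<not> ordLess2 (card_of K) (card_of Fam)"
    using nb unfolding below_b_def by blast
  have "ordLeq3 (card_of Fam) (card_of K)"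
    using not_ordLess_iff_ordLeq[OF card_of_Well_order card_of_Well_order] Fam(2) by blast
  moreover have "Fam \<noteq> {}" using Fam(1) unfolding unbounded_family_def by auto
  ultimately have "\<exists>\<phi>. \<phi> ` K = Fam" using card_of_ordLeq2[of Fam K] by simp
  then obtain \<phi> :: "'a \<Rightarrow> nat \<Rightarrow> nat" where \<phi>: "\<phi> ` K = Fam" by blast
  have unb: "\<not> (\<forall>\<alpha>\<in>K. eventually (\<lambda>n. \<phi> \<alpha> n \<le> G n) sequentially)" for G
    using Fam(1) \<phi> unfolding unbounded_family_def by blast
  have "\<exists>n0. \<forall>j. \<exists>\<alpha>\<in>K. j < \<phi> \<alpha> n0"
  proof (rule ccontr)
    assume "\<not> ?thesis"
    then have "\<forall>n. \<exists>j. \<forall>\<alpha>\<in>K. \<phi> \<alpha> n \<le> j" by (auto simp: not_less)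
    then obtain G where "\<forall>n. \<forall>\<alpha>\<in>K. \<phi> \<alpha> n \<le> G n" using choice[of "\<lambda>n j. \<forall>\<alpha>\<in>K. \<phi> \<alpha> n \<le> j"] by blast
    then show False using unb[of G] by auto
  qed
  then obtain n0 where n0: "\<And>j. \<exists>\<alpha>\<in>K. j < \<phi> \<alpha> n0" by blast
  define \<psi> where "\<psi> \<alpha> n = Max ((\<lambda>i. \<phi> \<alpha> i) ` {..n + n0})" for \<alpha> n
  have \<psi>ge: "\<phi> \<alpha> i \<le> \<psi> \<alpha> n" if "i \<le> n + n0" for \<alpha> i n
    unfolding \<psi>_def using that by (intro Max_ge) auto
  have \<psi>mono: "\<psi> \<alpha> n \<le> \<psi> \<alpha> n'" if "n \<le> n'" for \<alpha> n n'
    unfolding \<psi>_def using that by (intro Max_mono) auto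
  have unb\<psi>: "\<not> (\<forall>\<alpha>\<in>K. eventually (\<lambda>n. \<psi> \<alpha> n \<le> G n) sequentially)" for G
  proof
    assume "\<forall>\<alpha>\<in>K. eventually (\<lambda>n. \<psi> \<alpha> n \<le> G n) sequentially"
    have "\<forall>\<alpha>\<in>K. eventually (\<lambda>n. \<phi> \<alpha> n \<le> G n) sequentially"
    proof (intro ballI)
      fix \<alpha> assume "\<alpha> \<in> K"
      then have "eventually (\<lambda>n. \<psi> \<alpha> n \<le> G n) sequentially" using \<open>\<forall>\<alpha>\<in>K. _\<close> by blast
      then show "eventually (\<lambda>n. \<phi> \<alpha> n \<le> G n) sequentially"
      proof (rule eventually_mono)
        fix n assume "\<psi> \<alpha> n \<le> G n"
        moreover have "\<phi> \<alpha> n \<le> \<psi> \<alpha> n" by (rule \<psi>ge) simp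
        ultimately show "\<phi> \<alpha> n \<le> G n" by linarith
      qed
    qed
    then show False using unb by blast
  qed
  define d where "d n m j = (\<lambda>\<alpha>. if \<alpha> \<in> K then (if j < \<psi> \<alpha> n then True else c m \<alpha>) else undefined)"
    for n m j :: nat
  define D where "D n = {d n m j | m j. True}" for n
  have dtop: "d n m j \<in> topspace (cantor_cube K)" for n m j
    unfolding topspace_cc d_def PiE_def extensional_def by auto
  have Dsd: "seq_dense (cantor_cube K) (D n)" for n
    unfolding seq_dense_def
  proof (intro conjI ballI)
    show "D n \<subseteq> topspace (cantor_cube K)" unfolding D_def using dtop by blast
  next
    fix z assume z: "z \<in> topspace (cantor_cube K)"
    obtain s where s: "range s \<subseteq> range c" "limitin (cantor_cube K) s z sequentially"
      using c z unfolding seq_dense_def by blast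
    have "\<forall>k. \<exists>m. s k = c m" using s(1) by blast
    then obtain m where m: "\<And>k. s k = c (m k)" by metis
    define t where "t k = d n (m k) k" for k
    have "limitin (cantor_cube K) t z sequentially"
      unfolding limitin_cc
    proof (intro conjI ballI)
      show "z \<in> extensional K" using z by (simp add: topspace_cc PiE_def)
      show "\<forall>\<^sub>F k in sequentially. t k \<in> PiE K (\<lambda>_. UNIV)"
        using dtop unfolding t_def topspace_cc by (intro always_eventually) blast
    next
      fix \<alpha> assume a: "\<alpha> \<in> K"
      obtain N where N: "\<And>k. k \<ge> N \<Longrightarrow> s k \<alpha> = z \<alpha>"
        using s(2) a unfolding limitin_cc eventually_sequentially by blast
      have "t k \<alpha> = z \<alpha>" if "k \<ge> max N (\<psi> \<alpha> n)" for k
        using N[of k] that a m[of k] unfolding t_def d_def by auto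
      then show "\<forall>\<^sub>F k in sequentially. t k \<alpha> = z \<alpha>" unfolding eventually_sequentially by blast
    qed
    moreover have "range t \<subseteq> D n" unfolding t_def D_def by blast
    ultimately show "\<exists>s. range s \<subseteq> D n \<and> limitin (cantor_cube K) s z sequentially" by blast
  qed
  have "\<exists>F. (\<forall>n. finite (F n) \<and> F n \<subseteq> D n) \<and> seq_dense (cantor_cube K) (\<Union>n. F n)"
    using sss[unfolded sel_seq_separable_def, rule_format, of D, OF Dsd] .
  then obtain F where F: "\<And>n. finite (F n)" "\<And>n. F n \<subseteq> D n" "seq_dense (cantor_cube K) (\<Union>n. F n)"
    by blast
  have "\<forall>n. \<exists>G. \<forall>x\<in>F n. \<exists>j\<le>G. \<exists>m. x = d n m j"
  proof
    fix n
    have "\<forall>x\<in>F n. \<exists>j m. x = d n m j" using F(2)[of n] unfolding D_def by blast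
    then show "\<exists>G. \<forall>x\<in>F n. \<exists>j\<le>G. \<exists>m. x = d n m j" using finite_bound_ex[OF F(1)[of n], of "\<lambda>x j. \<exists>m. x = d n m j"] by blast
  qed
  then obtain g where g: "\<forall>n. \<forall>x\<in>F n. \<exists>j\<le>g n. \<exists>m. x = d n m j"
    using choice[of "\<lambda>n G. \<forall>x\<in>F n. \<exists>j\<le>G. \<exists>m. x = d n m j"] by blast
  define z0 where "z0 = (\<lambda>\<alpha>. if \<alpha> \<in> K then False else undefined)"
  have z0: "z0 \<in> topspace (cantor_cube K)" unfolding topspace_cc z0_def PiE_def extensional_def by auto
  obtain y where y: "range y \<subseteq> (\<Union>n. F n)" "limitin (cantor_cube K) y z0 sequentially"
    using F(3) z0 unfolding seq_dense_def by blast
  have y0: "\<exists>M. \<forall>k\<ge>M. \<not> y k \<alpha>" if "\<alpha> \<in> K" for \<alpha>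
  proof -
    have "eventually (\<lambda>k. y k \<alpha> = z0 \<alpha>) sequentially" using y(2) that unfolding limitin_cc by blast
    then show ?thesis using that unfolding eventually_sequentially z0_def by simp
  qed
  have "\<forall>k. \<exists>n. y k \<in> F n" using y(1) by blast
  then obtain nk where nk: "\<forall>k. y k \<in> F (nk k)" using choice[of "\<lambda>k n. y k \<in> F n"] by blast
  have "\<forall>k. \<exists>j. j \<le> g (nk k) \<and> (\<exists>m. y k = d (nk k) m j)" using g nk by blast
  then obtain jk where jk: "\<forall>k. jk k \<le> g (nk k) \<and> (\<exists>m. y k = d (nk k) m (jk k))"
    using choice[of "\<lambda>k j. j \<le> g (nk k) \<and> (\<exists>m. y k = d (nk k) m j)"] by blast
  then obtain mk where mk: "\<forall>k. y k = d (nk k) (mk k) (jk k)"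
    using choice[of "\<lambda>k m. y k = d (nk k) m (jk k)"] by blast
  show False
  proof (cases "\<exists>N. \<not> finite {k. nk k \<le> N}")
    case True
    then obtain N where N: "\<not> finite {k. nk k \<le> N}" by blast
    have fin: "finite (y ` {k. nk k \<le> N})"
    proof (rule finite_subset)
      show "y ` {k. nk k \<le> N} \<subseteq> (\<Union>n\<in>{..N}. F n)" using nk by blast
      show "finite (\<Union>n\<in>{..N}. F n)" using F(1) by simp
    qed
    obtain k0 where k0: "k0 \<in> {k. nk k \<le> N}" "\<not> finite {k \<in> {k. nk k \<le> N}. y k = y k0}"
      using pigeonhole_infinite[OF N fin] by blast
    obtain \<alpha> where a: "\<alpha> \<in> K" "jk k0 < \<phi> \<alpha> n0" using n0 by blast
    have "\<phi> \<alpha> n0 \<le> \<psi> \<alpha> (nk k0)" by (rule \<psi>ge) simp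
    then have ya: "y k0 \<alpha>" using a mk unfolding d_def by auto
    obtain M where M: "\<forall>k\<ge>M. \<not> y k \<alpha>" using y0[OF a(1)] by blast
    obtain k where k: "k \<in> {k \<in> {k. nk k \<le> N}. y k = y k0}" "k \<ge> M" using infinite_ge[OF k0(2)] by blast
    then show False using M ya by auto
  next
    case False
    then have finN: "finite {k. nk k \<le> N}" for N by blast
    have ex: "\<exists>k. n \<le> nk k" for n
    proof -
      obtain k where "k \<notin> {k. nk k \<le> n}" using ex_new_if_finite[OF infinite_UNIV_nat finN] by blast
      then show ?thesis by (intro exI[of _ k]) auto
    qed
    define kk where "kk n = (LEAST k. n \<le> nk k)" for n
    have kkp: "n \<le> nk (kk n)" for n unfolding kk_def by (rule LeastI_ex[OF ex])
    define G where "G n = g (nk (kk n))" for n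
    obtain \<alpha> where a: "\<alpha> \<in> K" "\<not> eventually (\<lambda>n. \<psi> \<alpha> n \<le> G n) sequentially"
      using unb\<psi>[of G] by blast
    obtain M where M: "\<forall>k\<ge>M. \<not> y k \<alpha>" using y0[OF a(1)] by blast
    define N0 where "N0 = Max (nk ` {..<M})"
    have "\<exists>n\<ge>Suc N0. G n < \<psi> \<alpha> n" using a(2) unfolding eventually_sequentially by (auto simp: not_le)
    then obtain n where n: "n \<ge> Suc N0" "G n < \<psi> \<alpha> n" by blast
    define k where "k = kk n"
    have nkk: "n \<le> nk k" unfolding k_def by (rule kkp)
    have kM: "k \<ge> M"
    proof (rule ccontr)
      assume "\<not> M \<le> k"
      then have "nk k \<le> N0" unfolding N0_def by (intro Max_ge) auto
      then show False using nkk n(1) by simp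
    qed
    have "jk k \<le> g (nk k)" using jk by blast
    also have "g (nk k) = G n" unfolding G_def k_def by simp
    also have "G n < \<psi> \<alpha> n" by (rule n(2))
    also have "\<psi> \<alpha> n \<le> \<psi> \<alpha> (nk k)" by (rule \<psi>mono[OF nkk])
    finally have "y k \<alpha>" using mk a(1) unfolding d_def by auto
    then show False using M kM by blast
  qed
qed

lemma sss_imp_sep:
  fixes K :: "'a set"
  assumes "sel_seq_separable (cantor_cube K)"
  shows "\<exists>c :: nat \<Rightarrow> 'a \<Rightarrow> bool. seq_dense (cantor_cube K) (range c)"
proof -
  define T where "T = topspace (cantor_cube K)"
  have Tsd: "seq_dense (cantor_cube K) T"
    unfolding seq_dense_def T_def
  proof (intro conjI ballI)
    fix z assume "z \<in> topspace (cantor_cube K)"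
    then show "\<exists>s. range s \<subseteq> topspace (cantor_cube K) \<and> limitin (cantor_cube K) s z sequentially"
      by (intro exI[of _ "\<lambda>_. z"]) auto
  qed simp
  from assms have "\<forall>D. (\<forall>n::nat. seq_dense (cantor_cube K) (D n)) \<longrightarrow>
        (\<exists>F. (\<forall>n. finite (F n) \<and> F n \<subseteq> D n) \<and> seq_dense (cantor_cube K) (\<Union>n. F n))"
    unfolding sel_seq_separable_def .
  then have "\<exists>F. (\<forall>n::nat. finite (F n) \<and> F n \<subseteq> (\<lambda>_. T) n) \<and> seq_dense (cantor_cube K) (\<Union>n. F n)"
    using Tsd by (elim allE[of _ "\<lambda>_. T"]) simp
  then obtain F :: "nat \<Rightarrow> ('a \<Rightarrow> bool) set" where F: "\<And>n. finite (F n)" "seq_dense (cantor_cube K) (\<Union>n. F n)" by auto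
  define C where "C = (\<Union>n. F n)"
  have cC: "countable C" unfolding C_def by (rule countable_UN) (auto intro: countable_finite F(1))
  define z0 where "z0 = (\<lambda>\<alpha>. if \<alpha> \<in> K then False else (undefined :: bool))"
  have z0: "z0 \<in> topspace (cantor_cube K)" unfolding topspace_cc z0_def PiE_def extensional_def by auto
  have FC: "seq_dense (cantor_cube K) C" unfolding C_def by (rule F(2))
  have "\<exists>s. range s \<subseteq> C \<and> limitin (cantor_cube K) s z0 sequentially"
    using FC z0 unfolding seq_dense_def by blast
  then obtain s :: "nat \<Rightarrow> 'a \<Rightarrow> bool" where "range s \<subseteq> C" by blast
  then have Cne: "C \<noteq> {}" by blast
  have rC: "range (from_nat_into C) = C" using Cne cC by (rule range_from_nat_into)
  show ?thesis by (intro exI[of _ "from_nat_into C"]) (simp only: rC FC)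
qed

definition grph :: "(nat \<Rightarrow> nat) \<Rightarrow> nat \<Rightarrow> bool" where
  "grph f = (\<lambda>k. \<exists>n. k = prod_encode (n, f n))"

lemma inj_grph: "inj grph"
proof (rule injI)
  fix f g assume eq: "grph f = grph g"
  show "f = g"
  proof
    fix n
    have "grph f (prod_encode (n, f n))" unfolding grph_def by blast
    then have "grph g (prod_encode (n, f n))" using eq by simp
    then obtain n' where "prod_encode (n, f n) = prod_encode (n', g n')" unfolding grph_def by blast
    then show "f n = g n" by (auto simp: prod_encode_eq)
  qed
qed

lemma inj_enc: "inj enc"
proof (rule injI, rule ccontr)
  fix a b assume eq: "enc a = enc b" and ne: "a \<noteq> b"
  then obtain k where "a k \<noteq> b k" by blast
  then have "(1/3::real) ^ Suc k \<le> \<bar>enc a - enc b\<bar>" by (rule enc_sep)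
  moreover have "(0::real) < (1/3) ^ Suc k" by simp
  moreover have "\<bar>enc a - enc b\<bar> = 0" using eq by simp
  ultimately show False by linarith
qed

lemma not_below_b_UNIV: "\<not> below_b (UNIV :: real set)"
proof
  assume b: "below_b (UNIV :: real set)"
  have "unbounded_family (UNIV :: (nat \<Rightarrow> nat) set)"
    unfolding unbounded_family_def
  proof
    assume "\<exists>g. \<forall>f\<in>(UNIV :: (nat \<Rightarrow> nat) set). eventually (\<lambda>n. f n \<le> g n) sequentially"
    then obtain g :: "nat \<Rightarrow> nat" where g: "\<forall>f\<in>(UNIV :: (nat \<Rightarrow> nat) set). eventually (\<lambda>n. f n \<le> g n) sequentially" by blast
    have "eventually (\<lambda>n. g n + 1 \<le> g n) sequentially" using g[rule_format, of "\<lambda>n. g n + 1"] by simp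
    then show False by (simp add: eventually_sequentially)
  qed
  then have l: "ordLess2 (card_of (UNIV :: real set)) (card_of (UNIV :: (nat \<Rightarrow> nat) set))"
    using b unfolding below_b_def by blast
  have "inj_on (enc \<circ> grph) UNIV" using inj_enc inj_grph by (simp add: inj_compose)
  then have "ordLeq3 (card_of (UNIV :: (nat \<Rightarrow> nat) set)) (card_of (UNIV :: real set))"
    using card_of_ordLeq[of "UNIV :: (nat \<Rightarrow> nat) set" "UNIV :: real set"] by blast
  then show False using l not_ordLess_ordLeq by blast
qed

lemma exists_min_K:
  "\<exists>K :: real set. \<not> below_min_bq K \<and>
     (\<forall>K' :: real set. ordLess2 (card_of K') (card_of K) \<longrightarrow> below_min_bq K')"
proof -
  define S where "S = {card_of K | K :: real set. \<not> below_min_bq K}"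
  have US: "card_of (UNIV :: real set) \<in> S" unfolding S_def below_min_bq_def using not_below_b_UNIV by blast
  obtain r where r: "r \<in> S" "\<And>y :: real rel. (y, r) \<in> ordLess \<Longrightarrow> y \<notin> S"
    using wfE_min[OF wf_ordLess US] by blast
  then obtain K where K: "r = card_of K" "\<not> below_min_bq K" unfolding S_def by blast
  have "below_min_bq K'" if "ordLess2 (card_of K') (card_of K)" for K' :: "real set"
  proof (rule ccontr)
    assume "\<not> below_min_bq K'"
    then have "card_of K' \<in> S" unfolding S_def by blast
    then show False using r(2) that K(1) by blast
  qed
  then show ?thesis using K(2) by blast
qed

theorem theorem5p2:
  shows "(\<forall>K :: 'a set. below_min_bq K \<longrightarrow> sel_seq_separable (cantor_cube K))
       \<and> (\<exists>K :: real set. \<not> below_min_bq K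
              \<and> (\<forall>K' :: real set. ordLess2 (card_of K') (card_of K) \<longrightarrow> below_min_bq K')
              \<and> \<not> sel_seq_separable (cantor_cube K))"
proof (intro conjI allI impI)
  fix K :: "'a set" assume "below_min_bq K"
  then have b: "below_b K" and q: "below_q K" unfolding below_min_bq_def by auto
  obtain c :: "nat \<Rightarrow> 'a \<Rightarrow> bool" where "seq_dense (cantor_cube K) (range c)"
    using sep_from_q[OF b q] by blast
  then show "sel_seq_separable (cantor_cube K)" using sss_from_sep[OF b] by blast
next
  obtain K :: "real set" where K: "\<not> below_min_bq K"
    "\<forall>K' :: real set. ordLess2 (card_of K') (card_of K) \<longrightarrow> below_min_bq K'"
    using exists_min_K by blast
  have "\<not> sel_seq_separable (cantor_cube K)"
  proof
    assume sss: "sel_seq_separable (cantor_cube K)"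
    obtain c :: "nat \<Rightarrow> real \<Rightarrow> bool" where c: "seq_dense (cantor_cube K) (range c)"
      using sss_imp_sep[OF sss] by blast
    have "below_q K" by (rule q_from_sep[OF c])
    then have "\<not> below_b K" using K(1) unfolding below_min_bq_def by blast
    then show False using not_sss_b[OF c] sss by blast
  qed
  then show "\<exists>K :: real set. \<not> below_min_bq K
              \<and> (\<forall>K' :: real set. ordLess2 (card_of K') (card_of K) \<longrightarrow> below_min_bq K')
              \<and> \<not> sel_seq_separable (cantor_cube K)" using K by blast
qed

end
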